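(* Let $\mathcal{X}=\{1,\dots,n\}$ with $n\ge 2$, let $\pi$ be a strictly positive probability distribution on $\mathcal{X}$, let $P$ be a $\pi$-reversible transition matrix, and fix $\alpha\in(0,1)$. With $g$ and $A_\alpha(S)$ as defined below, and identifying a singleton $\{x\}$ with $x$, $$\operatorname*{argmin}_{S\neq\mathcal{X},\,|S|=1}\|A_\alpha(S)-\Pi\|_{F,\pi}^2=\operatorname*{argmax}_{S\neq\mathcal{X},\,|S|=1}g(S)=\operatorname*{argmax}_{x\in\mathcal{X}}\frac{1-P(x,x)}{1-\pi(x)}.$$
   Context: $S'=\mathcal{X}\setminus S$; $g(S)=\frac{1}{\pi(S)\pi(S')}\sum_{x\in S,\,y\in S'}\pi(x)P(x,y)$. $\pi$-reversible means $\pi(x)P(x,y)=\pi(y)P(y,x)$. For $S\neq\emptyset,\mathcal{X}$, $A_\alpha(S)=\alpha P+(1-\alpha)G_S$ where $G_S(x,y)=\pi(y)/\pi(\mathcal{O}(x))$ if $y\in\mathcal{O}(x)$ and $0$ otherwise, $\mathcal{O}(x)\in\{S,S'\}$ the block containing $x$. $\Pi$ is the matrix with every row equal to $\pi$; $\|M\|_{F,\pi}^2=\operatorname{Tr}(M^*M)$ with $M^*(x,y)=\pi(y)M(y,x)/\pi(x)$. *)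

theory Defs
  imports Main "HOL-Analysis.Analysis"
begin

text \<open>Matrices on a finite state space X are functions nat => nat => real;
  only their values on X x X matter.\<close>

definition prob_dist :: "nat set \<Rightarrow> (nat \<Rightarrow> real) \<Rightarrow> bool" where
  "prob_dist X \<mu> \<longleftrightarrow> (\<forall>x\<in>X. \<mu> x > 0) \<and> sum \<mu> X = 1"

definition transition_matrix :: "nat set \<Rightarrow> (nat \<Rightarrow> nat \<Rightarrow> real) \<Rightarrow> bool" where
  "transition_matrix X P \<longleftrightarrow> (\<forall>x\<in>X. \<forall>y\<in>X. P x y \<ge> 0) \<and> (\<forall>x\<in>X. (\<Sum>y\<in>X. P x y) = 1)"

definition reversible :: "nat set \<Rightarrow> (nat \<Rightarrow> real) \<Rightarrow> (nat \<Rightarrow> nat \<Rightarrow> real) \<Rightarrow> bool" where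
  "reversible X \<mu> P \<longleftrightarrow> (\<forall>x\<in>X. \<forall>y\<in>X. \<mu> x * P x y = \<mu> y * P y x)"

definition cond_g :: "nat set \<Rightarrow> (nat \<Rightarrow> real) \<Rightarrow> (nat \<Rightarrow> nat \<Rightarrow> real) \<Rightarrow> nat set \<Rightarrow> real" where
  "cond_g X \<mu> P S = 1 / (sum \<mu> S * sum \<mu> (X - S)) * (\<Sum>x\<in>S. \<Sum>y\<in>X - S. \<mu> x * P x y)"

definition block_of :: "nat set \<Rightarrow> nat set \<Rightarrow> nat \<Rightarrow> nat set" where
  "block_of X S x = (if x \<in> S then S else X - S)"

definition G_mat :: "nat set \<Rightarrow> (nat \<Rightarrow> real) \<Rightarrow> nat set \<Rightarrow> nat \<Rightarrow> nat \<Rightarrow> real" where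
  "G_mat X \<mu> S x y = (if y \<in> block_of X S x then \<mu> y / sum \<mu> (block_of X S x) else 0)"

definition A_mat :: "nat set \<Rightarrow> (nat \<Rightarrow> real) \<Rightarrow> (nat \<Rightarrow> nat \<Rightarrow> real) \<Rightarrow> real \<Rightarrow> nat set \<Rightarrow> nat \<Rightarrow> nat \<Rightarrow> real" where
  "A_mat X \<mu> P \<alpha> S x y = \<alpha> * P x y + (1 - \<alpha>) * G_mat X \<mu> S x y"

definition Pi_mat :: "(nat \<Rightarrow> real) \<Rightarrow> nat \<Rightarrow> nat \<Rightarrow> real" where
  "Pi_mat \<mu> x y = \<mu> y"

definition adj_pi :: "(nat \<Rightarrow> real) \<Rightarrow> (nat \<Rightarrow> nat \<Rightarrow> real) \<Rightarrow> nat \<Rightarrow> nat \<Rightarrow> real" where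
  "adj_pi \<mu> M x y = \<mu> y * M y x / \<mu> x"

definition mat_mult :: "nat set \<Rightarrow> (nat \<Rightarrow> nat \<Rightarrow> real) \<Rightarrow> (nat \<Rightarrow> nat \<Rightarrow> real) \<Rightarrow> nat \<Rightarrow> nat \<Rightarrow> real" where
  "mat_mult X M N x y = (\<Sum>z\<in>X. M x z * N z y)"

definition mat_trace :: "nat set \<Rightarrow> (nat \<Rightarrow> nat \<Rightarrow> real) \<Rightarrow> real" where
  "mat_trace X M = (\<Sum>x\<in>X. M x x)"

definition frob_sq :: "nat set \<Rightarrow> (nat \<Rightarrow> real) \<Rightarrow> (nat \<Rightarrow> nat \<Rightarrow> real) \<Rightarrow> real" where
  "frob_sq X \<mu> M = mat_trace X (mat_mult X (adj_pi \<mu> M) M)"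

definition argmin_on :: "('a \<Rightarrow> real) \<Rightarrow> 'a set \<Rightarrow> 'a set" where
  "argmin_on f A = {a\<in>A. \<forall>b\<in>A. f a \<le> f b}"

definition argmax_on :: "('a \<Rightarrow> real) \<Rightarrow> 'a set \<Rightarrow> 'a set" where
  "argmax_on f A = {a\<in>A. \<forall>b\<in>A. f b \<le> f a}"

end

theory Submission
  imports Defs
begin

lemma frob_form: "frob_sq X \<mu> M = (\<Sum>z\<in>X. \<Sum>x\<in>X. \<mu> z * (M z x)^2 / \<mu> x)"
  unfolding frob_sq_def mat_trace_def mat_mult_def adj_pi_def
  by (subst sum.swap) (simp add: power2_eq_square mult.assoc)

lemma pt_alg: "(c::real) * (a*q + (1-a)*r)^2 / d = a^2 * (c * q^2 / d) + 2*a*(1-a) * (c * q * r / d) + (1-a)^2 * (c * r^2 / d)"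
  by (simp add: divide_inverse power2_eq_square algebra_simps)

context
  fixes X :: "nat set" and \<mu> :: "nat \<Rightarrow> real" and P :: "nat \<Rightarrow> nat \<Rightarrow> real" and S :: "nat set"
  assumes fin: "finite X" and pd: "prob_dist X \<mu>" and tm: "transition_matrix X P"
    and rv: "reversible X \<mu> P" and SX: "S \<subseteq> X" and Sne: "S \<noteq> {}" and SnX: "S \<noteq> X"
begin

lemma mpos: "x \<in> X \<Longrightarrow> \<mu> x > 0" using pd by (auto simp: prob_dist_def)
lemma msum: "sum \<mu> X = 1" using pd by (auto simp: prob_dist_def)
lemma Prow: "z \<in> X \<Longrightarrow> (\<Sum>x\<in>X. P z x) = 1" using tm by (auto simp: transition_matrix_def)

lemma blk_sub: "block_of X S z \<subseteq> X" using SX by (auto simp: block_of_def)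
lemma blk_fin: "finite (block_of X S z)" using blk_sub fin finite_subset by blast
lemma blk_pos: "sum \<mu> (block_of X S z) > 0"
proof -
  have "block_of X S z \<noteq> {}" using Sne SnX SX by (auto simp: block_of_def)
  moreover have "\<forall>x\<in>block_of X S z. \<mu> x > 0" using blk_sub mpos by blast
  ultimately show ?thesis using blk_fin by (simp add: sum_pos)
qed

lemma sum_blk: "(\<Sum>x\<in>X. if x \<in> block_of X S z then f x else 0) = (\<Sum>x\<in>block_of X S z. f x)"
proof -
  have "(\<Sum>x\<in>X. if x \<in> block_of X S z then f x else 0) = (\<Sum>x\<in>X \<inter> block_of X S z. f x)"
    using fin by (simp add: sum.inter_restrict)
  also have "X \<inter> block_of X S z = block_of X S z" using blk_sub by blast
  finally show ?thesis .
qed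

lemma G_row: "(\<Sum>x\<in>X. G_mat X \<mu> S z x) = 1"
proof -
  have "(\<Sum>x\<in>X. G_mat X \<mu> S z x) = (\<Sum>x\<in>block_of X S z. \<mu> x / sum \<mu> (block_of X S z))"
    unfolding G_mat_def by (rule sum_blk)
  also have "\<dots> = 1" using blk_pos[of z] by (simp add: sum_divide_distrib[symmetric])
  finally show ?thesis .
qed

lemma G_sq: "(\<Sum>x\<in>X. (G_mat X \<mu> S z x)^2 / \<mu> x) = 1 / sum \<mu> (block_of X S z)"
proof -
  have "(\<Sum>x\<in>X. (G_mat X \<mu> S z x)^2 / \<mu> x) = (\<Sum>x\<in>X. if x \<in> block_of X S z then \<mu> x / (sum \<mu> (block_of X S z))^2 else 0)"
    apply (rule sum.cong, simp)
    subgoal for x using mpos[of x] by (auto simp: G_mat_def power2_eq_square)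
    done
  also have "\<dots> = (\<Sum>x\<in>block_of X S z. \<mu> x / (sum \<mu> (block_of X S z))^2)" by (rule sum_blk)
  also have "\<dots> = 1 / sum \<mu> (block_of X S z)" using blk_pos[of z]
    by (simp add: sum_divide_distrib[symmetric] power2_eq_square)
  finally show ?thesis .
qed

lemma PG: "(\<Sum>x\<in>X. P z x * G_mat X \<mu> S z x / \<mu> x) = (\<Sum>x\<in>block_of X S z. P z x) / sum \<mu> (block_of X S z)"
proof -
  have "(\<Sum>x\<in>X. P z x * G_mat X \<mu> S z x / \<mu> x) = (\<Sum>x\<in>X. if x \<in> block_of X S z then P z x / sum \<mu> (block_of X S z) else 0)"
    apply (rule sum.cong, simp)
    subgoal for x using mpos[of x] by (auto simp: G_mat_def)
    done
  also have "\<dots> = (\<Sum>x\<in>block_of X S z. P z x / sum \<mu> (block_of X S z))" by (rule sum_blk)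
  also have "\<dots> = (\<Sum>x\<in>block_of X S z. P z x) / sum \<mu> (block_of X S z)"
    by (simp add: sum_divide_distrib[symmetric])
  finally show ?thesis .
qed

lemma split_S: "(\<Sum>z\<in>X. f z) = (\<Sum>z\<in>S. f z) + (\<Sum>z\<in>X - S. f z)"
  using sum.subset_diff[OF SX fin] by (simp add: add.commute)

lemma mS_pos: "sum \<mu> S > 0" and mS'_pos: "sum \<mu> (X - S) > 0" and mS_add: "sum \<mu> S + sum \<mu> (X - S) = 1"
proof -
  obtain s where "s \<in> S" using Sne by blast
  have "sum \<mu> (block_of X S s) > 0" by (rule blk_pos)
  then show "sum \<mu> S > 0" using \<open>s \<in> S\<close> by (simp add: block_of_def)
  obtain t where "t \<in> X" "t \<notin> S" using SnX SX by blast
  have "sum \<mu> (block_of X S t) > 0" by (rule blk_pos)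
  then show "sum \<mu> (X - S) > 0" using \<open>t \<notin> S\<close> by (simp add: block_of_def)
  show "sum \<mu> S + sum \<mu> (X - S) = 1" using split_S[of \<mu>] msum by simp
qed

lemma R2: "(\<Sum>z\<in>X. \<Sum>x\<in>X. \<mu> z * (G_mat X \<mu> S z x - \<mu> x)^2 / \<mu> x) = 1"
proof -
  have inner: "(\<Sum>x\<in>X. \<mu> z * (G_mat X \<mu> S z x - \<mu> x)^2 / \<mu> x) = \<mu> z / sum \<mu> (block_of X S z) - \<mu> z" for z
  proof -
    have "(\<Sum>x\<in>X. \<mu> z * (G_mat X \<mu> S z x - \<mu> x)^2 / \<mu> x)
        = (\<Sum>x\<in>X. \<mu> z * ((G_mat X \<mu> S z x)^2 / \<mu> x) - 2 * \<mu> z * G_mat X \<mu> S z x + \<mu> z * \<mu> x)"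
      apply (rule sum.cong, simp)
      subgoal for x using mpos[of x] by (simp add: power2_eq_square field_simps)
      done
    also have "\<dots> = \<mu> z * (\<Sum>x\<in>X. (G_mat X \<mu> S z x)^2 / \<mu> x) - 2 * \<mu> z * (\<Sum>x\<in>X. G_mat X \<mu> S z x) + \<mu> z * sum \<mu> X"
      by (simp add: sum.distrib sum_subtractf sum_distrib_left)
    also have "\<dots> = \<mu> z / sum \<mu> (block_of X S z) - \<mu> z" by (simp add: G_sq G_row msum)
    finally show ?thesis .
  qed
  have "(\<Sum>z\<in>X. \<Sum>x\<in>X. \<mu> z * (G_mat X \<mu> S z x - \<mu> x)^2 / \<mu> x) = (\<Sum>z\<in>X. \<mu> z / sum \<mu> (block_of X S z)) - 1"
    by (simp add: inner sum_subtractf msum)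
  also have "(\<Sum>z\<in>X. \<mu> z / sum \<mu> (block_of X S z)) = (\<Sum>z\<in>S. \<mu> z / sum \<mu> S) + (\<Sum>z\<in>X - S. \<mu> z / sum \<mu> (X - S))"
    by (subst split_S) (simp add: block_of_def)
  also have "\<dots> = 2" using mS_pos mS'_pos by (simp add: sum_divide_distrib[symmetric])
  finally show ?thesis by simp
qed

definition "flow = (\<Sum>x\<in>S. \<Sum>y\<in>X - S. \<mu> x * P x y)"

lemma QR: "(\<Sum>z\<in>X. \<Sum>x\<in>X. \<mu> z * (P z x - \<mu> x) * (G_mat X \<mu> S z x - \<mu> x) / \<mu> x) = 1 - cond_g X \<mu> P S"
proof -
  have inner: "(\<Sum>x\<in>X. \<mu> z * (P z x - \<mu> x) * (G_mat X \<mu> S z x - \<mu> x) / \<mu> x)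
     = \<mu> z * (\<Sum>x\<in>block_of X S z. P z x) / sum \<mu> (block_of X S z) - \<mu> z" if z: "z \<in> X" for z
  proof -
    have "(\<Sum>x\<in>X. \<mu> z * (P z x - \<mu> x) * (G_mat X \<mu> S z x - \<mu> x) / \<mu> x)
        = (\<Sum>x\<in>X. \<mu> z * (P z x * G_mat X \<mu> S z x / \<mu> x) - \<mu> z * P z x - \<mu> z * G_mat X \<mu> S z x + \<mu> z * \<mu> x)"
      apply (rule sum.cong, simp)
      subgoal for x using mpos[of x] by (simp add: field_simps)
      done
    also have "\<dots> = \<mu> z * (\<Sum>x\<in>X. P z x * G_mat X \<mu> S z x / \<mu> x) - \<mu> z * (\<Sum>x\<in>X. P z x) - \<mu> z * (\<Sum>x\<in>X. G_mat X \<mu> S z x) + \<mu> z * sum \<mu> X"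
      by (simp add: sum.distrib sum_subtractf sum_distrib_left)
    also have "\<dots> = \<mu> z * (\<Sum>x\<in>block_of X S z. P z x) / sum \<mu> (block_of X S z) - \<mu> z"
      by (simp add: PG G_row msum Prow z)
    finally show ?thesis .
  qed
  have "(\<Sum>z\<in>X. \<Sum>x\<in>X. \<mu> z * (P z x - \<mu> x) * (G_mat X \<mu> S z x - \<mu> x) / \<mu> x)
      = (\<Sum>z\<in>X. \<mu> z * (\<Sum>x\<in>block_of X S z. P z x) / sum \<mu> (block_of X S z)) - 1"
    by (simp add: inner sum_subtractf msum)
  also have "(\<Sum>z\<in>X. \<mu> z * (\<Sum>x\<in>block_of X S z. P z x) / sum \<mu> (block_of X S z))
     = (\<Sum>z\<in>S. \<Sum>x\<in>S. \<mu> z * P z x) / sum \<mu> S + (\<Sum>z\<in>X - S. \<Sum>x\<in>X - S. \<mu> z * P z x) / sum \<mu> (X - S)"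
    by (subst split_S) (simp add: block_of_def sum_divide_distrib[symmetric] sum_distrib_left)
  also have "(\<Sum>z\<in>S. \<Sum>x\<in>S. \<mu> z * P z x) = sum \<mu> S - flow"
  proof -
    have "(\<Sum>z\<in>S. \<Sum>x\<in>S. \<mu> z * P z x) = (\<Sum>z\<in>S. \<mu> z * (\<Sum>x\<in>X. P z x) - (\<Sum>x\<in>X - S. \<mu> z * P z x))"
      apply (rule sum.cong, simp)
      by (subst split_S) (simp add: distrib_left sum_distrib_left)
    also have "\<dots> = sum \<mu> S - flow" using SX Prow by (auto simp: flow_def sum_subtractf intro!: sum.cong)
    finally show ?thesis .
  qed
  also have "(\<Sum>z\<in>X - S. \<Sum>x\<in>X - S. \<mu> z * P z x) = sum \<mu> (X - S) - flow"
  proof -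
    have "(\<Sum>z\<in>X - S. \<Sum>x\<in>X - S. \<mu> z * P z x) = (\<Sum>z\<in>X - S. \<mu> z * (\<Sum>x\<in>X. P z x) - (\<Sum>x\<in>S. \<mu> z * P z x))"
      apply (rule sum.cong, simp)
      by (subst split_S) (simp add: distrib_left sum_distrib_left)
    also have "\<dots> = sum \<mu> (X - S) - (\<Sum>z\<in>X - S. \<Sum>x\<in>S. \<mu> z * P z x)" using Prow by (auto simp: sum_subtractf intro!: sum.cong)
    also have "(\<Sum>z\<in>X - S. \<Sum>x\<in>S. \<mu> z * P z x) = (\<Sum>z\<in>X - S. \<Sum>x\<in>S. \<mu> x * P x z)"
      using rv SX by (auto simp: reversible_def intro!: sum.cong)
    also have "\<dots> = flow" unfolding flow_def by (rule sum.swap)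
    finally show ?thesis .
  qed
  also have "cond_g X \<mu> P S = flow / (sum \<mu> S * sum \<mu> (X - S))" by (simp add: cond_g_def flow_def)
  ultimately have eq: "(\<Sum>z\<in>X. \<Sum>x\<in>X. \<mu> z * (P z x - \<mu> x) * (G_mat X \<mu> S z x - \<mu> x) / \<mu> x)
     = (sum \<mu> S - flow) / sum \<mu> S + (sum \<mu> (X - S) - flow) / sum \<mu> (X - S) - 1 \<and> cond_g X \<mu> P S = flow / (sum \<mu> S * sum \<mu> (X - S))" by simp
  have alg: "(a - F) / a + (b - F) / b - 1 = 1 - F / (a * b)" if "a > 0" "b > 0" "a + b = 1" for a b F :: real
  proof -
    have "(a - F) / a + (b - F) / b - 1 = 1 - F * (a + b) / (a * b)" using that by (simp add: field_simps) (metis distrib_left mult.right_neutral that(3))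
    then show ?thesis using that by (simp add: distrib_left[symmetric])
  qed
  show ?thesis using eq alg[OF mS_pos mS'_pos mS_add] by simp
qed

lemma f_formula: "frob_sq X \<mu> (\<lambda>x y. A_mat X \<mu> P a S x y - Pi_mat \<mu> x y)
   = a^2 * (\<Sum>z\<in>X. \<Sum>x\<in>X. \<mu> z * (P z x - \<mu> x)^2 / \<mu> x) + 2*a*(1-a) * (1 - cond_g X \<mu> P S) + (1-a)^2"
proof -
  have "frob_sq X \<mu> (\<lambda>x y. A_mat X \<mu> P a S x y - Pi_mat \<mu> x y)
     = (\<Sum>z\<in>X. \<Sum>x\<in>X. a^2 * (\<mu> z * (P z x - \<mu> x)^2 / \<mu> x) + 2*a*(1-a) * (\<mu> z * (P z x - \<mu> x) * (G_mat X \<mu> S z x - \<mu> x) / \<mu> x) + (1-a)^2 * (\<mu> z * (G_mat X \<mu> S z x - \<mu> x)^2 / \<mu> x))"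
    unfolding frob_form
  proof (intro sum.cong refl)
    fix z x
    have "A_mat X \<mu> P a S z x - Pi_mat \<mu> z x = a * (P z x - \<mu> x) + (1 - a) * (G_mat X \<mu> S z x - \<mu> x)"
      by (simp add: A_mat_def Pi_mat_def algebra_simps)
    then show "\<mu> z * (A_mat X \<mu> P a S z x - Pi_mat \<mu> z x)^2 / \<mu> x = a^2 * (\<mu> z * (P z x - \<mu> x)^2 / \<mu> x) + 2*a*(1-a) * (\<mu> z * (P z x - \<mu> x) * (G_mat X \<mu> S z x - \<mu> x) / \<mu> x) + (1-a)^2 * (\<mu> z * (G_mat X \<mu> S z x - \<mu> x)^2 / \<mu> x)"
      using pt_alg by simp
  qed
  also have "\<dots> = a^2 * (\<Sum>z\<in>X. \<Sum>x\<in>X. \<mu> z * (P z x - \<mu> x)^2 / \<mu> x) + 2*a*(1-a) * (\<Sum>z\<in>X. \<Sum>x\<in>X. \<mu> z * (P z x - \<mu> x) * (G_mat X \<mu> S z x - \<mu> x) / \<mu> x) + (1-a)^2 * (\<Sum>z\<in>X. \<Sum>x\<in>X. \<mu> z * (G_mat X \<mu> S z x - \<mu> x)^2 / \<mu> x)"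
    by (simp add: sum.distrib sum_distrib_left)
  also have "\<dots> = a^2 * (\<Sum>z\<in>X. \<Sum>x\<in>X. \<mu> z * (P z x - \<mu> x)^2 / \<mu> x) + 2*a*(1-a) * (1 - cond_g X \<mu> P S) + (1-a)^2"
    by (simp add: QR R2)
  finally show ?thesis .
qed

end

lemma g_single:
  assumes fin: "finite X" and pd: "prob_dist X \<mu>" and tm: "transition_matrix X P" and s: "s \<in> X"
  shows "cond_g X \<mu> P {s} = (1 - P s s) / (1 - \<mu> s)"
proof -
  have ms: "\<mu> s > 0" using pd s by (auto simp: prob_dist_def)
  have m1: "sum \<mu> (X - {s}) = 1 - \<mu> s" using pd s fin by (simp add: prob_dist_def sum_diff1)
  have p1: "(\<Sum>y\<in>X - {s}. P s y) = 1 - P s s" using tm s fin by (simp add: transition_matrix_def sum_diff1)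
  have "cond_g X \<mu> P {s} = 1 / (\<mu> s * (1 - \<mu> s)) * (\<mu> s * (1 - P s s))"
    by (simp add: cond_g_def m1 p1 sum_distrib_left[symmetric])
  also have "\<dots> = (1 - P s s) / (1 - \<mu> s)" using ms by simp
  finally show ?thesis .
qed

theorem corollary4p9:
  fixes n :: nat and \<mu> :: "nat \<Rightarrow> real" and P :: "nat \<Rightarrow> nat \<Rightarrow> real" and \<alpha> :: real
  assumes "n \<ge> 2"
    and "prob_dist {1..n} \<mu>"
    and "transition_matrix {1..n} P"
    and "reversible {1..n} \<mu> P"
    and "0 < \<alpha>" and "\<alpha> < 1"
  shows "argmin_on (\<lambda>S. frob_sq {1..n} \<mu>
            (\<lambda>x y. A_mat {1..n} \<mu> P \<alpha> S x y - Pi_mat \<mu> x y))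
          {S. S \<subseteq> {1..n} \<and> S \<noteq> {1..n} \<and> card S = 1}
       = argmax_on (cond_g {1..n} \<mu> P) {S. S \<subseteq> {1..n} \<and> S \<noteq> {1..n} \<and> card S = 1}
     \<and> argmax_on (cond_g {1..n} \<mu> P) {S. S \<subseteq> {1..n} \<and> S \<noteq> {1..n} \<and> card S = 1}
       = (\<lambda>x. {x}) ` argmax_on (\<lambda>x. (1 - P x x) / (1 - \<mu> x)) {1..n}"
proof -
  define X where "X = {1..n}"
  define F where "F = {S. S \<subseteq> X \<and> S \<noteq> X \<and> card S = 1}"
  define K where "K = (\<Sum>z\<in>X. \<Sum>x\<in>X. \<mu> z * (P z x - \<mu> x)^2 / \<mu> x)"
  define h where "h = (\<lambda>x. (1 - P x x) / (1 - \<mu> x))"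
  have fin: "finite X" by (simp add: X_def)
  have FX: "F = (\<lambda>x. {x}) ` X"
  proof
    show "F \<subseteq> (\<lambda>x. {x}) ` X" by (auto simp: F_def card_1_singleton_iff)
    have "{x} \<noteq> X" if "x \<in> X" for x
    proof
      assume "{x} = X"
      then have "card X = card {x}" by simp
      then have "card X = 1" by simp
      moreover have "card X = n" by (simp add: X_def)
      ultimately show False using assms(1) by simp
    qed
    then show "(\<lambda>x. {x}) ` X \<subseteq> F" by (auto simp: F_def)
  qed
  have fS: "frob_sq X \<mu> (\<lambda>x y. A_mat X \<mu> P \<alpha> S x y - Pi_mat \<mu> x y)
       = \<alpha>^2 * K + 2*\<alpha>*(1-\<alpha>) * (1 - cond_g X \<mu> P S) + (1-\<alpha>)^2" if "S \<in> F" for S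
  proof -
    from that have "S \<subseteq> X" "S \<noteq> {}" "S \<noteq> X" by (auto simp: F_def)
    then show ?thesis unfolding K_def
      using f_formula[OF fin assms(2,3,4)[folded X_def]] by blast
  qed
  have c: "2*\<alpha>*(1-\<alpha>) > 0" using assms(5,6) by simp
  have 1: "argmin_on (\<lambda>S. frob_sq X \<mu> (\<lambda>x y. A_mat X \<mu> P \<alpha> S x y - Pi_mat \<mu> x y)) F = argmax_on (cond_g X \<mu> P) F"
    unfolding argmin_on_def argmax_on_def
    using fS c by (auto simp: mult_le_cancel_left_pos)
  have gh: "cond_g X \<mu> P {x} = h x" if "x \<in> X" for x
    unfolding h_def using g_single[OF fin assms(2,3)[folded X_def] that] .
  have 2: "argmax_on (cond_g X \<mu> P) F = (\<lambda>x. {x}) ` argmax_on h X"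
    unfolding FX argmax_on_def using gh by auto
  show ?thesis using 1 2 unfolding X_def F_def h_def by simp
qed
end
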